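(* Let $(G,L)$ be a labelled edge-coloured digraph. Then, in $\mathrm{NCQSym}(\mathbf{x})$, $$\Delta(\mathscr{Y}_{(G,L)}(\mathbf{x}))=\sum_F\mathscr{Y}_{(G|_{V(G)-V(F)},\,L_{V(G)-V(F)})}(\mathbf{x})\otimes\mathscr{Y}_{(F,\,L_{V(F)})}(\mathbf{x}),$$ where the sum runs over all $\{\rightarrow,\Rightarrow\}$-induced subdigraphs $F$ of $G$.
   Context: An edge-coloured digraph is a finite simple digraph with each edge dashed ($\dashrightarrow$), solid ($\rightarrow$) or double ($\Rightarrow$); a proper vertex-colouring is $\kappa:V\to\mathbb{P}$ with $\kappa(a)\ne\kappa(b)$, $\kappa(a)<\kappa(b)$, $\kappa(a)\le\kappa(b)$ for dashed, solid, double edges $(a,b)$ respectively. A labelled edge-coloured digraph $(G,L)$ has a bijection $L:V(G)\to[|V(G)|]$, and $\mathscr{Y}_{(G,L)}(\mathbf{x})=\sum_\kappa\mathbf{x}_{\kappa(L^{-1}(1))}\cdots\mathbf{x}_{\kappa(L^{-1}(|V(G)|))}$ over proper vertex-colourings, in noncommuting variables (equal to $1$ for the empty digraph). For $A\subseteq V(G)$, $G|_A$ is the induced subdigraph on $A$ with edge types kept, and $L_A:A\to[|A|]$ is $L_A(a)=\mathrm{std}_B(L(a))$ where $B=L(A)$ and $\mathrm{std}_B:B\to[|B|]$ is the unique order-preserving bijection. An induced subdigraph $F$ is $\{\rightarrow,\Rightarrow\}$-induced if $a\in V(F)$ and $a\rightarrow b$ or $a\Rightarrow b$ in $G$ imply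 $b\in V(F)$. $\mathrm{NCQSym}(\mathbf{x})$ is the space of bounded-degree series $f$ in noncommuting $\mathbf{x}$ such that for each set composition $\Phi=(\Phi_1|\cdots|\Phi_k)$ of $[n]$ all monomials $\mathbf{x}_{i_1}\cdots\mathbf{x}_{i_n}$ with $i_j=i_\ell$ for $j,\ell$ in a common block and $i_j<i_\ell$ for $j\in\Phi_p,\ell\in\Phi_q$, $p<q$, have equal coefficients; its coproduct evaluates $f$ on $\mathbf{x}_1<\mathbf{x}_2<\cdots<\mathbf{y}_1<\mathbf{y}_2<\cdots$, imposes $\mathbf{x}_i\mathbf{y}_j=\mathbf{y}_j\mathbf{x}_i$, reads the result as $\sum f_1(\mathbf{x})\otimes f_2(\mathbf{y})$ and replaces $\mathbf{y}$ by $\mathbf{x}$. *)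

theory Defs
  imports Main
begin

text \<open>Edge types: dashed, solid (single arrow), double arrow.\<close>
datatype ecol = Dashed | Solid | Double

definition ec_digraph :: "'a set \<Rightarrow> ('a \<Rightarrow> 'a \<Rightarrow> ecol option) \<Rightarrow> bool" where
  "ec_digraph V E \<longleftrightarrow> finite V \<and> (\<forall>a. E a a = None) \<and>
     (\<forall>a b. E a b \<noteq> None \<longrightarrow> a \<in> V \<and> b \<in> V)"

definition labelling :: "'a set \<Rightarrow> ('a \<Rightarrow> nat) \<Rightarrow> bool" where
  "labelling V L \<longleftrightarrow> bij_betw L V {1..card V}"

definition proper_col :: "'a set \<Rightarrow> ('a \<Rightarrow> 'a \<Rightarrow> ecol option) \<Rightarrow> ('a \<Rightarrow> nat) \<Rightarrow> bool" where
  "proper_col A E \<kappa> \<longleftrightarrow> (\<forall>a\<in>A. \<kappa> a \<ge> 1) \<and>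
     (\<forall>a\<in>A. \<forall>b\<in>A.
        (E a b = Some Dashed \<longrightarrow> \<kappa> a \<noteq> \<kappa> b) \<and>
        (E a b = Some Solid \<longrightarrow> \<kappa> a < \<kappa> b) \<and>
        (E a b = Some Double \<longrightarrow> \<kappa> a \<le> \<kappa> b))"

text \<open>Noncommutative series in x_1, x_2, ...: a coefficient function on
  words (lists of variable indices). Letter i stands for x_i (i \<ge> 1).\<close>
type_synonym ncseries = "nat list \<Rightarrow> int"
type_synonym ncseries2 = "nat list \<times> nat list \<Rightarrow> int"

text \<open>The chromatic function Y_{(A,L)} of the induced subdigraph on A with
  labelling L: the coefficient of x_{w_1}...x_{w_n} is the number of proper
  colourings \<kappa> with \<kappa>(L^{-1}(i)) = w_i, which is 0 or 1.\<close>
definition chromY :: "'a set \<Rightarrow> ('a \<Rightarrow> 'a \<Rightarrow> ecol option) \<Rightarrow> ('a \<Rightarrow> nat) \<Rightarrow> ncseries" where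
  "chromY A E L w = int (card {\<kappa>. (\<forall>a. a \<notin> A \<longrightarrow> \<kappa> a = 0) \<and> proper_col A E \<kappa> \<and>
        length w = card A \<and> (\<forall>i \<in> {1..card A}. w ! (i - 1) = \<kappa> (the_inv_into A L i))})"

definition std_lab :: "('a \<Rightarrow> nat) \<Rightarrow> 'a set \<Rightarrow> 'a \<Rightarrow> nat" where
  "std_lab L A a = card {b \<in> A. L b \<le> L a}"

definition arrow_closed :: "'a set \<Rightarrow> ('a \<Rightarrow> 'a \<Rightarrow> ecol option) \<Rightarrow> 'a set \<Rightarrow> bool" where
  "arrow_closed V E F \<longleftrightarrow> F \<subseteq> V \<and>
     (\<forall>a\<in>F. \<forall>b. (E a b = Some Solid \<or> E a b = Some Double) \<longrightarrow> b \<in> F)"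

text \<open>NCQSym: bounded degree, only monomials in x_1,x_2,...,
  coefficients constant on monomials of the same set-composition pattern.\<close>
definition ncqsym :: "ncseries \<Rightarrow> bool" where
  "ncqsym f \<longleftrightarrow> (\<exists>d. \<forall>w. f w \<noteq> 0 \<longrightarrow> length w \<le> d) \<and>
     (\<forall>w. 0 \<in> set w \<longrightarrow> f w = 0) \<and>
     (\<forall>w w'. length w = length w' \<and> 0 \<notin> set w \<and> 0 \<notin> set w' \<and>
        (\<forall>i<length w. \<forall>j<length w. (w!i < w!j \<longleftrightarrow> w'!i < w'!j) \<and> (w!i = w!j \<longleftrightarrow> w'!i = w'!j))
        \<longrightarrow> f w = f w')"

fun merge :: "bool list \<Rightarrow> 'b list \<Rightarrow> 'b list \<Rightarrow> 'b list" where
  "merge [] xs ys = []"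
| "merge (True # ms) xs ys = hd xs # merge ms (tl xs) ys"
| "merge (False # ms) xs ys = hd ys # merge ms xs (tl ys)"

text \<open>Coproduct: the coefficient of u \<otimes> v in \<Delta> f is the sum of the coefficients
  in f(x_1<x_2<...<y_1<y_2<...) of all words whose x-part is u and y-part is v.
  The coefficient of such a word is that of the order-isomorphic word over
  x_1,x_2,... obtained by shifting the y-letters above all x-letters
  (well defined for f in NCQSym, and letters of u, v positive).\<close>
definition coprod :: "ncseries \<Rightarrow> ncseries2" where
  "coprod f = (\<lambda>(u, v). if 0 \<in> set u \<or> 0 \<in> set v then 0 else
      (\<Sum>ms \<in> {ms. length ms = length u + length v \<and> length (filter id ms) = length u}.
         f (merge ms u (map (\<lambda>j. j + Max (insert 0 (set u))) v))))"

definition tensor :: "ncseries \<Rightarrow> ncseries \<Rightarrow> ncseries2" where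
  "tensor f g = (\<lambda>(u, v). f u * g v)"

end

theory Submission imports Defs begin

definition kap :: "'a set \<Rightarrow> ('a \<Rightarrow> nat) \<Rightarrow> nat list \<Rightarrow> 'a \<Rightarrow> nat" where
  "kap A L w = (\<lambda>a. if a \<in> A then w ! (L a - 1) else 0)"

lemma proper_col_cong:
  assumes "\<And>a. a \<in> A \<Longrightarrow> k a = k' a"
  shows "proper_col A E k = proper_col A E k'"
  using assms unfolding proper_col_def by auto

lemma chromY_eq:
  assumes fin: "finite A" and bij: "bij_betw L A {1..card A}"
  shows "chromY A E L w = (if length w = card A \<and> proper_col A E (kap A L w) then 1 else 0)"
proof -
  define S where "S = {\<kappa>. (\<forall>a. a \<notin> A \<longrightarrow> \<kappa> a = 0) \<and> proper_col A E \<kappa> \<and>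
        length w = card A \<and> (\<forall>i \<in> {1..card A}. w ! (i - 1) = \<kappa> (the_inv_into A L i))}"
  have cS: "chromY A E L w = int (card S)" unfolding chromY_def S_def by simp
  have inj: "inj_on L A" using bij bij_betw_def by blast
  have LA: "a \<in> A \<Longrightarrow> L a \<in> {1..card A}" for a using bij bij_betwE by blast
  have inv: "i \<in> {1..card A} \<Longrightarrow> the_inv_into A L i \<in> A \<and> L (the_inv_into A L i) = i" for i
    using bij by (metis bij_betw_def f_the_inv_into_f the_inv_into_into subset_refl)
  have inv2: "a \<in> A \<Longrightarrow> the_inv_into A L (L a) = a" for a
    using inj the_inv_into_f_f by fastforce
  have sub: "\<kappa> = kap A L w" if k: "\<kappa> \<in> S" for \<kappa>
  proof
    fix a show "\<kappa> a = kap A L w a"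
    proof (cases "a \<in> A")
      case True
      have "\<forall>i \<in> {1..card A}. w ! (i - 1) = \<kappa> (the_inv_into A L i)" using k unfolding S_def by blast
      then have "w ! (L a - 1) = \<kappa> (the_inv_into A L (L a))" using LA[OF True] by blast
      then show ?thesis using True inv2 by (simp add: kap_def)
    next
      case False
      have "\<forall>a. a \<notin> A \<longrightarrow> \<kappa> a = 0" using k unfolding S_def by blast
      then show ?thesis using False by (simp add: kap_def)
    qed
  qed
  show ?thesis
  proof (cases "length w = card A \<and> proper_col A E (kap A L w)")
    case True
    have "\<forall>i \<in> {1..card A}. w ! (i - 1) = kap A L w (the_inv_into A L i)"
    proof
      fix i assume i: "i \<in> {1..card A}"
      show "w ! (i - 1) = kap A L w (the_inv_into A L i)" using inv[OF i] unfolding kap_def by simp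
    qed
    moreover have "\<forall>a. a \<notin> A \<longrightarrow> kap A L w a = 0" unfolding kap_def by simp
    ultimately have "kap A L w \<in> S" using True unfolding S_def by blast
    then have "S = {kap A L w}" using sub by blast
    then show ?thesis using True cS by simp
  next
    case False
    have "kap A L w \<notin> S" using False unfolding S_def by blast
    then have "S = {}" using sub by blast
    then show ?thesis using False cS by simp
  qed
qed

lemma chromY_zero:
  assumes fin: "finite A" and bij: "bij_betw L A {1..card A}" and z: "0 \<in> set w"
  shows "chromY A E L w = 0"
proof -
  have "\<not> (length w = card A \<and> proper_col A E (kap A L w))"
  proof
    assume h: "length w = card A \<and> proper_col A E (kap A L w)"
    obtain j where j: "j < length w" "w ! j = 0" using z by (metis in_set_conv_nth)
    then have "Suc j \<in> {1..card A}" using h by auto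
    then obtain a where a: "a \<in> A" "L a = Suc j" using bij by (metis bij_betw_def imageE)
    then have "kap A L w a = 0" using j by (simp add: kap_def)
    then show False using h a unfolding proper_col_def by force
  qed
  then show ?thesis using chromY_eq[OF fin bij] by simp
qed

lemma std_lab_bij:
  assumes fin: "finite A" and inj: "inj_on L A"
  shows "bij_betw (std_lab L A) A {1..card A}"
proof -
  have mono: "std_lab L A a < std_lab L A b" if a: "a \<in> A" and b: "b \<in> A" and lt: "L a < L b" for a b
  proof -
    define P where "P = {c \<in> A. L c \<le> L a}"
    define Q where "Q = {c \<in> A. L c \<le> L b}"
    have "P \<subseteq> Q" unfolding P_def Q_def using lt by auto
    moreover have "b \<in> Q" "b \<notin> P" unfolding P_def Q_def using b lt by auto
    ultimately have "P \<subset> Q" by blast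
    moreover have "finite Q" unfolding Q_def using fin by simp
    ultimately have "card P < card Q" by (simp add: psubset_card_mono)
    then show ?thesis unfolding std_lab_def P_def Q_def .
  qed
  have injs: "inj_on (std_lab L A) A"
  proof (rule inj_onI)
    fix a b assume a: "a \<in> A" and b: "b \<in> A" and e: "std_lab L A a = std_lab L A b"
    have "\<not> L a < L b"
    proof
      assume "L a < L b" then have "std_lab L A a < std_lab L A b" by (rule mono[OF a b])
      with e show False by simp
    qed
    moreover have "\<not> L b < L a"
    proof
      assume "L b < L a" then have "std_lab L A b < std_lab L A a" by (rule mono[OF b a])
      with e show False by simp
    qed
    ultimately have "L a = L b" by simp
    then show "a = b" using inj a b inj_onD by metis
  qed
  have img: "std_lab L A ` A \<subseteq> {1..card A}"
  proof
    fix x assume "x \<in> std_lab L A ` A"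
    then obtain a where a: "a \<in> A" "x = std_lab L A a" by blast
    define P where "P = {c \<in> A. L c \<le> L a}"
    have "a \<in> P" "finite P" using a fin unfolding P_def by auto
    then have "card P > 0" by (simp add: card_gt_0_iff) blast
    then have "card P \<ge> 1" by simp
    moreover have "card P \<le> card A" unfolding P_def using fin by (intro card_mono) auto
    ultimately show "x \<in> {1..card A}" using a unfolding std_lab_def P_def by simp
  qed
  have "card (std_lab L A ` A) = card {1..card A}" using injs by (simp add: card_image)
  then have "std_lab L A ` A = {1..card A}" using card_subset_eq[OF _ img] by simp
  then show ?thesis using injs bij_betw_def by blast
qed

lemma std_lab_lt:
  assumes fin: "finite A" and inj: "inj_on L A" and a: "a \<in> A"
  shows "std_lab L A a = Suc (card {b \<in> A. L b < L a})"
proof -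
  have "{b \<in> A. L b \<le> L a} = insert a {b \<in> A. L b < L a}" using a inj_onD[OF inj] by (auto simp: le_less)
  then show ?thesis unfolding std_lab_def using fin by simp
qed

lemma length_merge:
  "length (merge ms xs ys) = length ms"
  by (induction ms xs ys rule: merge.induct) auto

lemma merge_nth:
  "length (filter id ms) = length xs \<Longrightarrow> length (filter Not ms) = length ys \<Longrightarrow> k < length ms \<Longrightarrow>
   merge ms xs ys ! k = (if ms ! k then xs ! length (filter id (take k ms)) else ys ! length (filter Not (take k ms)))"
proof (induction ms xs ys arbitrary: k rule: merge.induct)
  case (1 xs ys) then show ?case by simp
next
  case (2 ms xs ys)
  then obtain x xs' where xs: "xs = x # xs'" by (cases xs) auto
  show ?case using 2 xs by (cases k) (auto simp: id_def)
next
  case (3 ms xs ys)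
  then obtain y ys' where ys: "ys = y # ys'" by (cases ys) auto
  show ?case using 3 ys by (cases k) (auto simp: id_def)
qed


lemma count_pos:
  assumes bij: "bij_betw L V {1..n}" and len: "length ms = n" and a: "a \<in> V"
  shows "card {b \<in> {c \<in> V. P (ms ! (L c - 1))}. L b < L a} = length (filter P (take (L a - 1) ms))"
proof -
  define k where "k = L a - 1"
  have La: "L a \<in> {1..n}" using bij a bij_betwE by blast
  then have kn: "k < n" unfolding k_def by auto
  have inj: "inj_on L V" using bij bij_betw_def by blast
  define S where "S = {b \<in> {c \<in> V. P (ms ! (L c - 1))}. L b < L a}"
  define T where "T = {j. j < k \<and> P (ms ! j)}"
  have r: "length (filter P (take k ms)) = card T"
  proof -
    have "{i. i < length (take k ms) \<and> P (take k ms ! i)} = T" using kn len unfolding T_def by auto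
    then show ?thesis unfolding length_filter_conv_card by simp
  qed
  have injf: "inj_on (\<lambda>b. L b - 1) S"
  proof (rule inj_onI)
    fix x y assume x: "x \<in> S" and y: "y \<in> S" and e: "L x - 1 = L y - 1"
    have "L x \<in> {1..n}" "L y \<in> {1..n}" using x y bij bij_betwE unfolding S_def by blast+
    then have "L x = L y" using e by auto
    then show "x = y" using inj x y inj_onD unfolding S_def by fastforce
  qed
  have img: "(\<lambda>b. L b - 1) ` S = T"
  proof
    show "(\<lambda>b. L b - 1) ` S \<subseteq> T"
    proof
      fix j assume "j \<in> (\<lambda>b. L b - 1) ` S"
      then obtain b where b: "b \<in> S" "j = L b - 1" by blast
      have "L b \<in> {1..n}" using b bij bij_betwE unfolding S_def by blast
      then show "j \<in> T" using b La unfolding S_def T_def k_def by auto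
    qed
  next
    show "T \<subseteq> (\<lambda>b. L b - 1) ` S"
    proof
      fix j assume j: "j \<in> T"
      then have "Suc j \<in> {1..n}" using kn unfolding T_def by auto
      then obtain b where b: "b \<in> V" "L b = Suc j" using bij by (metis bij_betw_def imageE)
      then have "b \<in> S" using j La unfolding S_def T_def k_def by auto
      then show "j \<in> (\<lambda>b. L b - 1) ` S" using b by force
    qed
  qed
  have "card S = card T" using card_image[OF injf] img by simp
  then show ?thesis using r unfolding S_def k_def by simp
qed

lemma proper_split:
  assumes G: "ec_digraph V E" and FV: "F \<subseteq> V"
    and k1: "\<And>a. a \<in> V - F \<Longrightarrow> \<kappa> a = \<kappa>1 a \<and> 1 \<le> \<kappa>1 a \<and> \<kappa>1 a \<le> M"
    and k2: "\<And>a. a \<in> F \<Longrightarrow> \<kappa> a = \<kappa>2 a + M \<and> 1 \<le> \<kappa>2 a"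
  shows "proper_col V E \<kappa> \<longleftrightarrow> arrow_closed V E F \<and> proper_col (V - F) E \<kappa>1 \<and> proper_col F E \<kappa>2"
proof
  assume p: "proper_col V E \<kappa>"
  have ac: "arrow_closed V E F"
    unfolding arrow_closed_def
  proof (intro conjI FV ballI allI impI)
    fix a b assume a: "a \<in> F" and e: "E a b = Some Solid \<or> E a b = Some Double"
    have bV: "b \<in> V" using G e unfolding ec_digraph_def by auto
    have aV: "a \<in> V" using a FV by auto
    have "(E a b = Some Solid \<longrightarrow> \<kappa> a < \<kappa> b) \<and> (E a b = Some Double \<longrightarrow> \<kappa> a \<le> \<kappa> b)"
      using p aV bV unfolding proper_col_def by blast
    then have le: "\<kappa> a \<le> \<kappa> b" using e by auto
    show "b \<in> F"
    proof (rule ccontr)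
      assume "b \<notin> F"
      then have "\<kappa> b \<le> M" using k1 bV by auto
      moreover have "\<kappa> a > M" using k2 a by fastforce
      ultimately show False using le by simp
    qed
  qed
  have p1: "proper_col (V - F) E \<kappa>1"
    unfolding proper_col_def
  proof (rule conjI; intro ballI)
    fix a assume "a \<in> V - F" then show "1 \<le> \<kappa>1 a" using k1 by blast
  next
    fix a b assume a: "a \<in> V - F" and b: "b \<in> V - F"
    have "\<kappa> a = \<kappa>1 a" "\<kappa> b = \<kappa>1 b" using k1 a b by auto
    moreover have "a \<in> V" "b \<in> V" using a b by auto
    moreover have "(E a b = Some Dashed \<longrightarrow> \<kappa> a \<noteq> \<kappa> b) \<and>
        (E a b = Some Solid \<longrightarrow> \<kappa> a < \<kappa> b) \<and> (E a b = Some Double \<longrightarrow> \<kappa> a \<le> \<kappa> b)" using p \<open>a \<in> V\<close> \<open>b \<in> V\<close> unfolding proper_col_def by blast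
    ultimately show "(E a b = Some Dashed \<longrightarrow> \<kappa>1 a \<noteq> \<kappa>1 b) \<and>
        (E a b = Some Solid \<longrightarrow> \<kappa>1 a < \<kappa>1 b) \<and> (E a b = Some Double \<longrightarrow> \<kappa>1 a \<le> \<kappa>1 b)"
      by simp
  qed
  have p2: "proper_col F E \<kappa>2"
    unfolding proper_col_def
  proof (rule conjI; intro ballI)
    fix a assume "a \<in> F" then show "1 \<le> \<kappa>2 a" using k2 by blast
  next
    fix a b assume a: "a \<in> F" and b: "b \<in> F"
    have "\<kappa> a = \<kappa>2 a + M" "\<kappa> b = \<kappa>2 b + M" using k2 a b by auto
    moreover have "a \<in> V" "b \<in> V" using a b FV by auto
    moreover have "(E a b = Some Dashed \<longrightarrow> \<kappa> a \<noteq> \<kappa> b) \<and>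
        (E a b = Some Solid \<longrightarrow> \<kappa> a < \<kappa> b) \<and> (E a b = Some Double \<longrightarrow> \<kappa> a \<le> \<kappa> b)" using p \<open>a \<in> V\<close> \<open>b \<in> V\<close> unfolding proper_col_def by blast
    ultimately show "(E a b = Some Dashed \<longrightarrow> \<kappa>2 a \<noteq> \<kappa>2 b) \<and>
        (E a b = Some Solid \<longrightarrow> \<kappa>2 a < \<kappa>2 b) \<and> (E a b = Some Double \<longrightarrow> \<kappa>2 a \<le> \<kappa>2 b)"
      by simp
  qed
  show "arrow_closed V E F \<and> proper_col (V - F) E \<kappa>1 \<and> proper_col F E \<kappa>2" using ac p1 p2 by blast
next
  assume h: "arrow_closed V E F \<and> proper_col (V - F) E \<kappa>1 \<and> proper_col F E \<kappa>2"
  have h1: "\<forall>a\<in>V - F. \<forall>b\<in>V - F. (E a b = Some Dashed \<longrightarrow> \<kappa>1 a \<noteq> \<kappa>1 b) \<and>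
          (E a b = Some Solid \<longrightarrow> \<kappa>1 a < \<kappa>1 b) \<and> (E a b = Some Double \<longrightarrow> \<kappa>1 a \<le> \<kappa>1 b)"
    using h unfolding proper_col_def by blast
  have h2: "\<forall>a\<in>F. \<forall>b\<in>F. (E a b = Some Dashed \<longrightarrow> \<kappa>2 a \<noteq> \<kappa>2 b) \<and>
          (E a b = Some Solid \<longrightarrow> \<kappa>2 a < \<kappa>2 b) \<and> (E a b = Some Double \<longrightarrow> \<kappa>2 a \<le> \<kappa>2 b)"
    using h unfolding proper_col_def by blast
  have hc: "\<forall>a\<in>F. \<forall>b. (E a b = Some Solid \<or> E a b = Some Double) \<longrightarrow> b \<in> F"
    using h unfolding arrow_closed_def by blast
  show "proper_col V E \<kappa>"
    unfolding proper_col_def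
  proof (rule conjI; intro ballI)
    fix a assume aV: "a \<in> V"
    show "1 \<le> \<kappa> a"
    proof (cases "a \<in> F")
      case True
      then have "\<kappa> a = \<kappa>2 a + M \<and> 1 \<le> \<kappa>2 a" by (rule k2)
      then show ?thesis by linarith
    next
      case False
      then have "a \<in> V - F" using aV by blast
      then have "\<kappa> a = \<kappa>1 a \<and> 1 \<le> \<kappa>1 a \<and> \<kappa>1 a \<le> M" by (rule k1)
      then show ?thesis by linarith
    qed
  next
    fix a b assume a: "a \<in> V" and b: "b \<in> V"
    show "(E a b = Some Dashed \<longrightarrow> \<kappa> a \<noteq> \<kappa> b) \<and>
        (E a b = Some Solid \<longrightarrow> \<kappa> a < \<kappa> b) \<and> (E a b = Some Double \<longrightarrow> \<kappa> a \<le> \<kappa> b)"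
    proof (cases "a \<in> F")
      case aF: True
      have ka: "\<kappa> a = \<kappa>2 a + M \<and> 1 \<le> \<kappa>2 a" using aF by (rule k2)
      show ?thesis
      proof (cases "b \<in> F")
        case True
        have kb: "\<kappa> b = \<kappa>2 b + M \<and> 1 \<le> \<kappa>2 b" using True by (rule k2)
        have "(E a b = Some Dashed \<longrightarrow> \<kappa>2 a \<noteq> \<kappa>2 b) \<and>
          (E a b = Some Solid \<longrightarrow> \<kappa>2 a < \<kappa>2 b) \<and> (E a b = Some Double \<longrightarrow> \<kappa>2 a \<le> \<kappa>2 b)"
          using h2 aF True by blast
        then show ?thesis using ka kb by simp
      next
        case False
        have "E a b \<noteq> Some Solid" "E a b \<noteq> Some Double" using hc aF False by blast+
        moreover have kb: "\<kappa> b = \<kappa>1 b \<and> 1 \<le> \<kappa>1 b \<and> \<kappa>1 b \<le> M" using False b by (intro k1) blast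
        then have "\<kappa> b < \<kappa> a" using ka by linarith
        ultimately show ?thesis by simp
      qed
    next
      case aF: False
      have ka: "\<kappa> a = \<kappa>1 a \<and> 1 \<le> \<kappa>1 a \<and> \<kappa>1 a \<le> M" using aF a by (intro k1) blast
      show ?thesis
      proof (cases "b \<in> F")
        case True
        have kb: "\<kappa> b = \<kappa>2 b + M \<and> 1 \<le> \<kappa>2 b" using True by (rule k2)
        have "\<kappa> a < \<kappa> b" using ka kb by linarith
        then show ?thesis by simp
      next
        case False
        have kb: "\<kappa> b = \<kappa>1 b \<and> 1 \<le> \<kappa>1 b \<and> \<kappa>1 b \<le> M" using False b by (intro k1) blast
        have "(E a b = Some Dashed \<longrightarrow> \<kappa>1 a \<noteq> \<kappa>1 b) \<and>
          (E a b = Some Solid \<longrightarrow> \<kappa>1 a < \<kappa>1 b) \<and> (E a b = Some Double \<longrightarrow> \<kappa>1 a \<le> \<kappa>1 b)"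
          using h1 a b aF False by blast
        then show ?thesis using ka kb by simp
      qed
    qed
  qed
qed


lemma count_all:
  assumes bij: "bij_betw L V {1..n}" and len: "length ms = n"
  shows "card {c \<in> V. P (ms ! (L c - 1))} = length (filter P ms)"
proof -
  have inj: "inj_on L V" using bij bij_betw_def by blast
  define S where "S = {c \<in> V. P (ms ! (L c - 1))}"
  define T where "T = {j. j < n \<and> P (ms ! j)}"
  have r: "length (filter P ms) = card T"
    unfolding length_filter_conv_card T_def using len by simp
  have injf: "inj_on (\<lambda>b. L b - 1) S"
  proof (rule inj_onI)
    fix x y assume x: "x \<in> S" and y: "y \<in> S" and e: "L x - 1 = L y - 1"
    have "L x \<in> {1..n}" "L y \<in> {1..n}" using x y bij bij_betwE unfolding S_def by blast+
    then have "L x = L y" using e by auto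
    then show "x = y" using inj x y inj_onD unfolding S_def by fastforce
  qed
  have img: "(\<lambda>b. L b - 1) ` S = T"
  proof
    show "(\<lambda>b. L b - 1) ` S \<subseteq> T"
    proof
      fix j assume "j \<in> (\<lambda>b. L b - 1) ` S"
      then obtain b where b: "b \<in> S" "j = L b - 1" by blast
      have "L b \<in> {1..n}" using b bij bij_betwE unfolding S_def by blast
      then show "j \<in> T" using b unfolding S_def T_def by auto
    qed
  next
    show "T \<subseteq> (\<lambda>b. L b - 1) ` S"
    proof
      fix j assume j: "j \<in> T"
      then have "Suc j \<in> {1..n}" unfolding T_def by auto
      then obtain b where b: "b \<in> V" "L b = Suc j" using bij by (metis bij_betw_def imageE)
      then have "b \<in> S" using j unfolding S_def T_def by auto
      then show "j \<in> (\<lambda>b. L b - 1) ` S" using b by force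
    qed
  qed
  have "card S = card T" using card_image[OF injf] img by simp
  then show ?thesis using r unfolding S_def by simp
qed

lemma proper_pattern:
  assumes eq: "\<And>a b. a \<in> V \<Longrightarrow> b \<in> V \<Longrightarrow> (k a < k b \<longleftrightarrow> k' a < k' b) \<and> (k a = k b \<longleftrightarrow> k' a = k' b)"
    and p1: "\<And>a. a \<in> V \<Longrightarrow> 1 \<le> k a" and p2: "\<And>a. a \<in> V \<Longrightarrow> 1 \<le> k' a"
  shows "proper_col V E k = proper_col V E k'"
proof -
  have "(E a b = Some Dashed \<longrightarrow> k a \<noteq> k b) \<and>
        (E a b = Some Solid \<longrightarrow> k a < k b) \<and> (E a b = Some Double \<longrightarrow> k a \<le> k b) \<longleftrightarrow>
        (E a b = Some Dashed \<longrightarrow> k' a \<noteq> k' b) \<and>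
        (E a b = Some Solid \<longrightarrow> k' a < k' b) \<and> (E a b = Some Double \<longrightarrow> k' a \<le> k' b)"
    if a: "a \<in> V" and b: "b \<in> V" for a b
  proof -
    have e: "(k a < k b \<longleftrightarrow> k' a < k' b) \<and> (k a = k b \<longleftrightarrow> k' a = k' b)" using eq[OF a b] .
    have "k a \<le> k b \<longleftrightarrow> k' a \<le> k' b" using e by (metis order_le_less)
    then show ?thesis using e by blast
  qed
  then show ?thesis unfolding proper_col_def using p1 p2 by blast
qed

lemma ncq:
  assumes fin: "finite V" and bij: "bij_betw L V {1..card V}"
  shows "ncqsym (chromY V E L)"
  unfolding ncqsym_def
proof (intro conjI allI impI)
  show "\<exists>d. \<forall>w. chromY V E L w \<noteq> 0 \<longrightarrow> length w \<le> d"
    by (rule exI[of _ "card V"]) (simp add: chromY_eq[OF fin bij])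
next
  fix w :: "nat list" assume "0 \<in> set w" then show "chromY V E L w = 0" by (rule chromY_zero[OF fin bij])
next
  fix w w' :: "nat list"
  assume h: "length w = length w' \<and> 0 \<notin> set w \<and> 0 \<notin> set w' \<and>
        (\<forall>i<length w. \<forall>j<length w. (w!i < w!j \<longleftrightarrow> w'!i < w'!j) \<and> (w!i = w!j \<longleftrightarrow> w'!i = w'!j))"
  show "chromY V E L w = chromY V E L w'"
  proof (cases "length w = card V")
    case True
    have idx: "a \<in> V \<Longrightarrow> L a - 1 < length w" for a using bij bij_betwE True
      by (metis Suc_le_eq Suc_pred atLeastAtMost_iff diff_less le_imp_less_Suc zero_less_one less_le_trans)
    have "proper_col V E (kap V L w) = proper_col V E (kap V L w')"
    proof (rule proper_pattern)
      fix a b assume a: "a \<in> V" and b: "b \<in> V"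
      show "(kap V L w a < kap V L w b \<longleftrightarrow> kap V L w' a < kap V L w' b) \<and>
            (kap V L w a = kap V L w b \<longleftrightarrow> kap V L w' a = kap V L w' b)"
        using h idx[OF a] idx[OF b] a b unfolding kap_def by simp
    next
      fix a assume a: "a \<in> V"
      have "w ! (L a - 1) \<in> set w" using idx[OF a] by simp
      then have "w ! (L a - 1) \<noteq> 0" using h by metis
      then show "1 \<le> kap V L w a" using a unfolding kap_def by simp
    next
      fix a assume a: "a \<in> V"
      have "w' ! (L a - 1) \<in> set w'" using idx[OF a] h by simp
      then have "w' ! (L a - 1) \<noteq> 0" using h by metis
      then show "1 \<le> kap V L w' a" using a unfolding kap_def by simp
    qed
    then show ?thesis using h by (simp add: chromY_eq[OF fin bij])
  next
    case False
    then show ?thesis using h by (simp add: chromY_eq[OF fin bij])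
  qed
qed


lemma key_term:
  assumes G: "ec_digraph V E" and bij: "bij_betw L V {1..card V}"
    and u0: "0 \<notin> set u" and v0: "0 \<notin> set v"
    and lms: "length ms = card V" and lid: "length (filter id ms) = length u"
    and luv: "length u + length v = card V"
    and Fd: "F = {a \<in> V. \<not> ms ! (L a - 1)}"
    and Md: "M = Max (insert 0 (set u))"
  shows "chromY V E L (merge ms u (map (\<lambda>j. j + M) v)) =
    (if arrow_closed V E F then chromY (V - F) E (std_lab L (V - F)) u * chromY F E (std_lab L F) v else 0)"
proof -
  have fin: "finite V" using G unfolding ec_digraph_def by blast
  have inj: "inj_on L V" using bij bij_betw_def by blast
  have FV: "F \<subseteq> V" using Fd by blast
  have VF: "V - F = {a \<in> V. id (ms ! (L a - 1))}" using Fd by auto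
  have Fd': "F = {a \<in> V. Not (ms ! (L a - 1))}" using Fd by simp
  have lnot: "length (filter Not ms) = length v"
    using sum_length_filter_compl[of id ms] lid lms luv by simp
  have cVF: "card (V - F) = length u" using count_all[OF bij lms, of id] VF lid by simp
  have cF: "card F = length v" using count_all[OF bij lms, of Not] Fd' lnot by simp
  have finF: "finite F" "finite (V - F)" using fin FV finite_subset by auto
  have b1: "bij_betw (std_lab L (V - F)) (V - F) {1..card (V - F)}"
    by (rule std_lab_bij[OF finF(2)]) (use inj in \<open>blast intro: inj_on_subset\<close>)
  have b2: "bij_betw (std_lab L F) F {1..card F}"
    by (rule std_lab_bij[OF finF(1)]) (use inj FV in \<open>blast intro: inj_on_subset\<close>)
  define v' where "v' = map (\<lambda>j. j + M) v"
  define w where "w = merge ms u v'"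
  have lw: "length w = card V" unfolding w_def using length_merge[of ms u v'] lms by simp
  have lv': "length (filter Not ms) = length v'" using lnot unfolding v'_def by simp
  have La: "a \<in> V \<Longrightarrow> L a \<in> {1..card V}" for a using bij bij_betwE by blast
  define k1 where "k1 = kap (V - F) (std_lab L (V - F)) u"
  define k2 where "k2 = kap F (std_lab L F) v"
  have K1: "kap V L w a = k1 a \<and> 1 \<le> k1 a \<and> k1 a \<le> M" if a: "a \<in> V - F" for a
  proof -
    have ms: "ms ! (L a - 1)" using a Fd by auto
    have lt: "L a - 1 < length ms" using La[of a] a lms by auto
    have "w ! (L a - 1) = u ! length (filter id (take (L a - 1) ms))"
      unfolding w_def using merge_nth[OF lid lv' lt] ms by simp
    also have "length (filter id (take (L a - 1) ms)) = std_lab L (V - F) a - 1"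
      using count_pos[OF bij lms, of a id] std_lab_lt[OF finF(2) inj_on_subset[OF inj] a] a VF by auto
    finally have e: "kap V L w a = k1 a" using a unfolding kap_def k1_def by simp
    have "std_lab L (V - F) a \<in> {1..card (V - F)}" using b1 a bij_betwE by blast
    then have "std_lab L (V - F) a - 1 < length u" using cVF by auto
    then have mem: "k1 a \<in> set u" using a unfolding k1_def kap_def by simp
    then have "k1 a \<noteq> 0" using u0 by metis
    moreover have "k1 a \<le> M" unfolding Md using mem by simp
    ultimately show ?thesis using e by simp
  qed
  have K2: "kap V L w a = k2 a + M \<and> 1 \<le> k2 a" if a: "a \<in> F" for a
  proof -
    have aV: "a \<in> V" using a FV by blast
    have ms: "\<not> ms ! (L a - 1)" using a Fd by auto
    have lt: "L a - 1 < length ms" using La[of a] aV lms by auto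
    have "w ! (L a - 1) = v' ! length (filter Not (take (L a - 1) ms))"
      unfolding w_def using merge_nth[OF lid lv' lt] ms by simp
    also have "length (filter Not (take (L a - 1) ms)) = std_lab L F a - 1"
      using count_pos[OF bij lms aV, of Not] std_lab_lt[OF finF(1) inj_on_subset[OF inj FV] a] a Fd' by auto
    finally have e0: "w ! (L a - 1) = v' ! (std_lab L F a - 1)" .
    have "std_lab L F a \<in> {1..card F}" using b2 a bij_betwE by blast
    then have il: "std_lab L F a - 1 < length v" using cF by auto
    then have e: "kap V L w a = k2 a + M" using e0 a aV unfolding kap_def k2_def v'_def by simp
    have mem: "k2 a \<in> set v" using a il unfolding k2_def kap_def by simp
    then have "k2 a \<noteq> 0" using v0 by metis
    then show ?thesis using e by simp
  qed
  have ps: "proper_col V E (kap V L w) \<longleftrightarrow> arrow_closed V E F \<and> proper_col (V - F) E k1 \<and> proper_col F E k2"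
    by (rule proper_split[OF G FV K1 K2])
  show ?thesis
    unfolding v'_def[symmetric] w_def[symmetric]
    using ps lw cVF cF
    by (simp add: chromY_eq[OF fin bij] chromY_eq[OF finF(2) b1] chromY_eq[OF finF(1) b2] k1_def k2_def)
qed


theorem mainTheorem10:
  fixes V :: "'a set" and E :: "'a \<Rightarrow> 'a \<Rightarrow> ecol option" and L :: "'a \<Rightarrow> nat"
  assumes "ec_digraph V E" and "labelling V L"
  shows "ncqsym (chromY V E L) \<and>
    coprod (chromY V E L) =
      (\<lambda>uv. \<Sum>F \<in> {F. arrow_closed V E F}.
          tensor (chromY (V - F) E (std_lab L (V - F))) (chromY F E (std_lab L F)) uv)"
proof -
  note G = assms(1)
  have fin: "finite V" using G unfolding ec_digraph_def by blast
  have bij: "bij_betw L V {1..card V}" using assms(2) unfolding labelling_def .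
  have inj: "inj_on L V" using bij bij_betw_def by blast
  define n where "n = card V"
  have La: "a \<in> V \<Longrightarrow> L a \<in> {1..n}" for a using bij bij_betwE unfolding n_def by blast
  have inv: "i \<in> {1..n} \<Longrightarrow> the_inv_into V L i \<in> V \<and> L (the_inv_into V L i) = i" for i
    using bij unfolding n_def by (metis bij_betw_def f_the_inv_into_f the_inv_into_into subset_refl)
  have inv2: "a \<in> V \<Longrightarrow> the_inv_into V L (L a) = a" for a
    using inj the_inv_into_f_f by fastforce
  have subbij: "bij_betw (std_lab L A) A {1..card A}" if "A \<subseteq> V" for A
    using std_lab_bij[OF finite_subset[OF that fin] inj_on_subset[OF inj that]] .
  have subfin: "finite A" if "A \<subseteq> V" for A using finite_subset[OF that fin] .
  have ACsub: "{F. arrow_closed V E F} \<subseteq> Pow V" unfolding arrow_closed_def by blast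
  have cop: "coprod (chromY V E L) (u, v) =
      (\<Sum>F \<in> {F. arrow_closed V E F}. chromY (V - F) E (std_lab L (V - F)) u * chromY F E (std_lab L F) v)"
    for u v
  proof (cases "0 \<in> set u \<or> 0 \<in> set v")
    case True
    have "chromY (V - F) E (std_lab L (V - F)) u * chromY F E (std_lab L F) v = 0"
      if "F \<in> {F. arrow_closed V E F}" for F
    proof -
      have FV: "F \<subseteq> V" using that unfolding arrow_closed_def by blast
      have D: "V - F \<subseteq> V" by blast
      show ?thesis using True chromY_zero[OF subfin[OF FV] subbij[OF FV]] chromY_zero[OF subfin[OF D] subbij[OF D]]
        by auto
    qed
    then have "(\<Sum>F \<in> {F. arrow_closed V E F}. chromY (V - F) E (std_lab L (V - F)) u * chromY F E (std_lab L F) v) = 0"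
      by (intro sum.neutral) blast
    then show ?thesis using True unfolding coprod_def by simp
  next
    case False
    define M where "M = Max (insert 0 (set u))"
    define MS where "MS = {ms. length ms = length u + length v \<and> length (filter id ms) = length u}"
    define g where "g F = chromY (V - F) E (std_lab L (V - F)) u * chromY F E (std_lab L F) v" for F
    define h where "h F = (if arrow_closed V E F then g F else 0)" for F
    have lhs: "coprod (chromY V E L) (u, v) = (\<Sum>ms \<in> MS. chromY V E L (merge ms u (map (\<lambda>j. j + M) v)))"
      using False unfolding coprod_def MS_def M_def by simp
    have gz: "g F = 0" if FV: "F \<subseteq> V" and c: "\<not> (card F = length v \<and> card (V - F) = length u)" for F
    proof -
      have D: "V - F \<subseteq> V" by blast
      show ?thesis using c unfolding g_def
        by (auto simp: chromY_eq[OF subfin[OF FV] subbij[OF FV]] chromY_eq[OF subfin[OF D] subbij[OF D]])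
    qed
    have rhs: "(\<Sum>F \<in> {F. arrow_closed V E F}. g F) = (\<Sum>F \<in> Pow V. h F)"
      by (rule sum.mono_neutral_cong_left) (use fin ACsub in \<open>auto simp: h_def\<close>)
    show ?thesis
    proof (cases "length u + length v = n")
      case False
      have "chromY V E L (merge ms u (map (\<lambda>j. j + M) v)) = 0" if "ms \<in> MS" for ms
        using that False length_merge[of ms u "map (\<lambda>j. j + M) v"]
        unfolding MS_def n_def by (simp add: chromY_eq[OF fin bij])
      then have l0: "coprod (chromY V E L) (u, v) = 0" using lhs by simp
      have "g F = 0" if "F \<in> {F. arrow_closed V E F}" for F
      proof -
        have FV: "F \<subseteq> V" using that unfolding arrow_closed_def by blast
        have "card (V - F) = card V - card F" using card_Diff_subset[OF subfin[OF FV] FV] .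
        moreover have "card F \<le> card V" using card_mono[OF fin FV] .
        ultimately have "\<not> (card F = length v \<and> card (V - F) = length u)" using False unfolding n_def by auto
        then show ?thesis using gz FV by blast
      qed
      then have "(\<Sum>F \<in> {F. arrow_closed V E F}. g F) = 0" by (intro sum.neutral) blast
      then show ?thesis using l0 unfolding g_def by simp
    next
      case True
      define T where "T = {F. F \<subseteq> V \<and> card F = length v}"
      define phi where "phi ms = {a \<in> V. \<not> ms ! (L a - 1)}" for ms :: "bool list"
      define mask where "mask F = map (\<lambda>k. the_inv_into V L (Suc k) \<notin> F) [0..<n]" for F
      have u0: "0 \<notin> set u" and v0: "0 \<notin> set v" using False by auto
      have stepA: "(\<Sum>ms \<in> MS. chromY V E L (merge ms u (map (\<lambda>j. j + M) v))) = (\<Sum>F \<in> T. h F)"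
      proof (rule sum.reindex_bij_witness[where i = mask and j = phi])
        fix ms assume ms: "ms \<in> MS"
        have lms: "length ms = n" using ms True unfolding MS_def by simp
        show "mask (phi ms) = ms"
        proof (rule nth_equalityI)
          show "length (mask (phi ms)) = length ms" using lms unfolding mask_def by simp
        next
          fix k assume "k < length (mask (phi ms))"
          then have k: "k < n" unfolding mask_def by simp
          then have "Suc k \<in> {1..n}" by simp
          note iv = inv[OF this]
          show "mask (phi ms) ! k = ms ! k" using k iv unfolding mask_def phi_def by simp
        qed
      next
        fix ms assume ms: "ms \<in> MS"
        have lms: "length ms = card V" using ms True unfolding MS_def n_def by simp
        have lid: "length (filter id ms) = length u" using ms unfolding MS_def by simp
        have lnot: "length (filter Not ms) = length v"
          using sum_length_filter_compl[of id ms] lid lms True unfolding n_def by simp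
        have "card (phi ms) = length v"
          using count_all[OF bij lms, of Not] lnot unfolding phi_def by simp
        then show "phi ms \<in> T" unfolding T_def phi_def by auto
      next
        fix F assume F: "F \<in> T"
        have FV: "F \<subseteq> V" using F unfolding T_def by blast
        show "phi (mask F) = F"
        proof
          show "phi (mask F) \<subseteq> F"
          proof
            fix a assume a: "a \<in> phi (mask F)"
            have aV: "a \<in> V" using a unfolding phi_def by blast
            have L1: "L a \<in> {1..n}" using La[OF aV] .
            then have "L a - 1 < n" by auto
            then have "mask F ! (L a - 1) = (the_inv_into V L (L a) \<notin> F)" using L1 unfolding mask_def by simp
            then show "a \<in> F" using a inv2[OF aV] unfolding phi_def by simp
          qed
        next
          show "F \<subseteq> phi (mask F)"
          proof
            fix a assume a: "a \<in> F"
            have aV: "a \<in> V" using a FV by blast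
            have L1: "L a \<in> {1..n}" using La[OF aV] .
            then have "L a - 1 < n" by auto
            then have "mask F ! (L a - 1) = (the_inv_into V L (L a) \<notin> F)" using L1 unfolding mask_def by simp
            then show "a \<in> phi (mask F)" using a aV inv2[OF aV] unfolding phi_def by simp
          qed
        qed
      next
        fix F assume F: "F \<in> T"
        have FV: "F \<subseteq> V" using F unfolding T_def by blast
        have lm: "length (mask F) = card V" unfolding mask_def n_def by simp
        have pm: "phi (mask F) = F"
        proof
          show "phi (mask F) \<subseteq> F"
          proof
            fix a assume a: "a \<in> phi (mask F)"
            have aV: "a \<in> V" using a unfolding phi_def by blast
            have L1: "L a \<in> {1..n}" using La[OF aV] .
            then have "L a - 1 < n" by auto
            then have "mask F ! (L a - 1) = (the_inv_into V L (L a) \<notin> F)" using L1 unfolding mask_def by simp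
            then show "a \<in> F" using a inv2[OF aV] unfolding phi_def by simp
          qed
        next
          show "F \<subseteq> phi (mask F)"
          proof
            fix a assume a: "a \<in> F"
            have aV: "a \<in> V" using a FV by blast
            have L1: "L a \<in> {1..n}" using La[OF aV] .
            then have "L a - 1 < n" by auto
            then have "mask F ! (L a - 1) = (the_inv_into V L (L a) \<notin> F)" using L1 unfolding mask_def by simp
            then show "a \<in> phi (mask F)" using a aV inv2[OF aV] unfolding phi_def by simp
          qed
        qed
        have "length (filter Not (mask F)) = card F"
          using count_all[OF bij lm, of Not] pm unfolding phi_def by simp
        then have "length (filter Not (mask F)) = length v" using F unfolding T_def by simp
        moreover have "length (filter id (mask F)) + length (filter Not (mask F)) = length (mask F)"
          using sum_length_filter_compl[of id "mask F"] by simp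
        ultimately show "mask F \<in> MS" using lm True unfolding MS_def n_def by simp
      next
        fix ms assume ms: "ms \<in> MS"
        have lms: "length ms = card V" using ms True unfolding MS_def n_def by simp
        have lid: "length (filter id ms) = length u" using ms unfolding MS_def by simp
        show "h (phi ms) = chromY V E L (merge ms u (map (\<lambda>j. j + M) v))"
          unfolding h_def g_def
          by (rule key_term[OF G bij u0 v0 lms lid _ _ M_def, symmetric])
             (use True in \<open>simp_all add: n_def phi_def\<close>)
      qed
      have stepB: "(\<Sum>F \<in> T. h F) = (\<Sum>F \<in> Pow V. h F)"
      proof (rule sum.mono_neutral_left)
        show "finite (Pow V)" using fin by simp
        show "T \<subseteq> Pow V" unfolding T_def by blast
        show "\<forall>i\<in>Pow V - T. h i = 0" using gz unfolding T_def h_def by auto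
      qed
      show ?thesis using lhs stepA stepB rhs unfolding g_def by simp
    qed
  qed
  show ?thesis
  proof
    show "ncqsym (chromY V E L)" by (rule ncq[OF fin bij])
  next
    show "coprod (chromY V E L) =
      (\<lambda>uv. \<Sum>F \<in> {F. arrow_closed V E F}.
          tensor (chromY (V - F) E (std_lab L (V - F))) (chromY F E (std_lab L F)) uv)"
    proof
      fix uv :: "nat list \<times> nat list"
      obtain u v where uv: "uv = (u, v)" by fastforce
      show "coprod (chromY V E L) uv = (\<Sum>F \<in> {F. arrow_closed V E F}.
          tensor (chromY (V - F) E (std_lab L (V - F))) (chromY F E (std_lab L F)) uv)"
        unfolding uv tensor_def using cop by simp
    qed
  qed
qed

end
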